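(* The Burgers transform does not preserve pointwise products: the identity $\mathcal{B}[f\cdot g](x,y) = \mathcal{B}[f](x,y) \cdot \mathcal{B}[g](x,y)$ fails in general at points with $x \neq 0$ (for holomorphic seeds $f,g$ with values in $\mathbb{C}_+$ whose product also takes values in $\mathbb{C}_+$).
   Context: $\mathbb{C}_+$ is the upper half-plane. For $U\subseteq\mathbb{C}$ open and connected with $U\cap\mathbb{R}$ containing an interval and $f\colon U\to\mathbb{C}_+$ holomorphic, the Burgers transform $\mathcal{B}[f]\colon\Omega_f\to\mathbb{C}_+$ is defined implicitly by $\mathcal{B}[f](x,y) = f(y - \mathcal{B}[f](x,y)\, x)$, where $\Omega_f \subseteq \mathbb{R}^2$ is the maximal open set on which this equation admits a unique $C^1$ solution with positive imaginary part. *)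

theory Defs
  imports "HOL-Analysis.Analysis"
begin

definition admissible_seed :: "complex set \<Rightarrow> (complex \<Rightarrow> complex) \<Rightarrow> bool" where
  "admissible_seed U f \<longleftrightarrow> open U \<and> connected U \<and>
     (\<exists>a b::real. a < b \<and> complex_of_real ` {a<..<b} \<subseteq> U) \<and>
     f holomorphic_on U \<and> (\<forall>z\<in>U. Im (f z) > 0)"

definition burgers_sol ::
  "complex set \<Rightarrow> (complex \<Rightarrow> complex) \<Rightarrow> (real \<times> real) set \<Rightarrow> (real \<times> real \<Rightarrow> complex) \<Rightarrow> bool" where
  "burgers_sol U f W u \<longleftrightarrow>
     (\<forall>p\<in>W. Im (u p) > 0 \<and>
            complex_of_real (snd p) - u p * complex_of_real (fst p) \<in> U \<and>
            u p = f (complex_of_real (snd p) - u p * complex_of_real (fst p))) \<and>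
     (\<exists>D :: real \<times> real \<Rightarrow> (real \<times> real) \<Rightarrow>\<^sub>L complex.
        (\<forall>p\<in>W. (u has_derivative blinfun_apply (D p)) (at p)) \<and> continuous_on W D)"

definition burgers_unique_on ::
  "complex set \<Rightarrow> (complex \<Rightarrow> complex) \<Rightarrow> (real \<times> real) set \<Rightarrow> (real \<times> real \<Rightarrow> complex) \<Rightarrow> bool" where
  "burgers_unique_on U f W u \<longleftrightarrow> open W \<and> burgers_sol U f W u \<and>
     (\<forall>v. burgers_sol U f W v \<longrightarrow> (\<forall>p\<in>W. v p = u p))"

definition burgers_domain ::
  "complex set \<Rightarrow> (complex \<Rightarrow> complex) \<Rightarrow> (real \<times> real) set \<Rightarrow> bool" where
  "burgers_domain U f \<Omega> \<longleftrightarrow> (\<exists>u. burgers_unique_on U f \<Omega> u) \<and>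
     (\<forall>W u. burgers_unique_on U f W u \<longrightarrow> W \<subseteq> \<Omega>)"

definition Omega_f :: "complex set \<Rightarrow> (complex \<Rightarrow> complex) \<Rightarrow> (real \<times> real) set" where
  "Omega_f U f = (THE \<Omega>. burgers_domain U f \<Omega>)"

text \<open>The Burgers transform: the unique solution on \<Omega>_f (values only meaningful on \<Omega>_f).\<close>
definition burgers :: "complex set \<Rightarrow> (complex \<Rightarrow> complex) \<Rightarrow> real \<Rightarrow> real \<Rightarrow> complex" where
  "burgers U f x y = (SOME u. burgers_unique_on U f (Omega_f U f) u) (x, y)"

end

theory Submission
  imports Defs
begin

lemma C1I:
  fixes u :: "real \<times> real \<Rightarrow> complex"
  assumes "\<And>p. p\<in>V \<Longrightarrow> (u has_derivative (\<lambda>h. fst h *\<^sub>R a p + snd h *\<^sub>R b p)) (at p)"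
    "continuous_on V a" "continuous_on V b"
  shows "\<exists>D :: real \<times> real \<Rightarrow> (real \<times> real) \<Rightarrow>\<^sub>L complex.
        (\<forall>p\<in>V. (u has_derivative blinfun_apply (D p)) (at p)) \<and> continuous_on V D"
proof (intro exI conjI ballI)
  let ?D = "\<lambda>p. (blinfun_scaleR_left (a p) o\<^sub>L fst_blinfun) + (blinfun_scaleR_left (b p) o\<^sub>L snd_blinfun)"
  fix p assume "p \<in> V"
  show "(u has_derivative blinfun_apply (?D p)) (at p)"
    using assms(1)[OF \<open>p\<in>V\<close>] by (simp add: plus_blinfun.rep_eq)
next
  let ?D = "\<lambda>p. (blinfun_scaleR_left (a p) o\<^sub>L fst_blinfun) + (blinfun_scaleR_left (b p) o\<^sub>L snd_blinfun)"
  show "continuous_on V ?D"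
    apply (rule continuous_on_blinfun_componentwise)
    using assms(2,3) by (auto simp: Basis_prod_def blinfun.add_left)
qed

lemma derg: "((\<lambda>p::real\<times>real. (1 + \<i> + of_real (snd p)) / (1 + of_real (fst p))) has_derivative
   (\<lambda>h. fst h *\<^sub>R (- (1 + \<i> + of_real (snd p)) / (1 + of_real (fst p))^2) + snd h *\<^sub>R (1 / (1 + of_real (fst p))))) (at p)"
  if "p \<in> {p. fst p \<noteq> -1}"
  apply (rule has_derivative_eq_rhs)
   apply (rule derivative_eq_intros refl)+
  subgoal using that by (simp add: complex_eq_iff)
  apply (rule refl)
  apply (rule ext)
  subgoal for h
    using that
    apply (subgoal_tac "1 + complex_of_real (fst p) \<noteq> 0")
     apply (simp add: scaleR_conv_of_real field_simps power2_eq_square)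
    by (simp add: complex_eq_iff)
  done
lemma derh: "((\<lambda>p::real\<times>real. \<i> * (1 + \<i> + of_real (snd p)) / (1 + \<i> * of_real (fst p))) has_derivative
   (\<lambda>h. fst h *\<^sub>R (- \<i> * \<i> * (1 + \<i> + of_real (snd p)) / (1 + \<i> * of_real (fst p))^2) + snd h *\<^sub>R (\<i> / (1 + \<i> * of_real (fst p))))) (at p)"
  apply (rule has_derivative_eq_rhs)
   apply (rule derivative_eq_intros refl)+
  subgoal by (simp add: complex_eq_iff)
  apply (rule refl)
  apply (rule ext)
  subgoal for h
    apply (subgoal_tac "1 + \<i> * complex_of_real (fst p) \<noteq> 0")
     apply (simp add: scaleR_conv_of_real field_simps power2_eq_square)
    by (simp add: complex_eq_iff)
  done

lemma domain_lemma:
  fixes U :: "complex set" and f :: "complex \<Rightarrow> complex" and V :: "(real\<times>real) set"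
    and u0 :: "real\<times>real \<Rightarrow> complex"
  defines "S \<equiv> {p\<in>V. Im (u0 p) > 0 \<and> of_real (snd p) - u0 p * of_real (fst p) \<in> U}"
  assumes U: "open U" and V: "open V" and cont: "continuous_on V u0"
    and C1: "\<exists>D :: real \<times> real \<Rightarrow> (real \<times> real) \<Rightarrow>\<^sub>L complex.
        (\<forall>p\<in>V. (u0 has_derivative blinfun_apply (D p)) (at p)) \<and> continuous_on V D"
    and val: "\<And>p w. Im w > 0 \<Longrightarrow> of_real (snd p) - w * of_real (fst p) \<in> U \<Longrightarrow>
        w = f (of_real (snd p) - w * of_real (fst p)) \<Longrightarrow> p \<in> V \<and> w = u0 p"
    and sol: "\<And>p. p \<in> V \<Longrightarrow> u0 p = f (of_real (snd p) - u0 p * of_real (fst p))"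
  shows "burgers_domain U f S \<and> Omega_f U f = S \<and> (\<forall>p\<in>S. burgers U f (fst p) (snd p) = u0 p)"
proof -
  have S_eq: "S = (u0 -` {w. Im w > 0} \<inter> V) \<inter> ((\<lambda>p. of_real (snd p) - u0 p * of_real (fst p)) -` U \<inter> V)"
    unfolding S_def by auto
  have oS: "open S"
    unfolding S_eq
  proof (rule open_Int)
    show "open (u0 -` {w. Im w > 0} \<inter> V)"
      by (rule continuous_on_open_vimage[OF V, THEN iffD1, rule_format, OF cont])
         (simp add: open_halfspace_Im_gt)
    show "open ((\<lambda>p. of_real (snd p) - u0 p * of_real (fst p)) -` U \<inter> V)"
      by (rule continuous_on_open_vimage[OF V, THEN iffD1, rule_format])
         (auto intro!: continuous_intros cont U)
  qed
  have solS: "burgers_sol U f S u0"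
    unfolding burgers_sol_def
  proof (intro conjI ballI)
    fix p assume "p \<in> S"
    then show "Im (u0 p) > 0" "of_real (snd p) - u0 p * of_real (fst p) \<in> U"
      "u0 p = f (of_real (snd p) - u0 p * of_real (fst p))"
      using sol by (auto simp: S_def)
  next
    from C1 obtain D where D: "\<forall>p\<in>V. (u0 has_derivative blinfun_apply (D p)) (at p)" "continuous_on V D"
      by blast
    show "\<exists>D :: real \<times> real \<Rightarrow> (real \<times> real) \<Rightarrow>\<^sub>L complex.
        (\<forall>p\<in>S. (u0 has_derivative blinfun_apply (D p)) (at p)) \<and> continuous_on S D"
      using D by (intro exI[of _ D]) (auto simp: S_def intro: continuous_on_subset)
  qed
  have solval: "p \<in> V \<and> v p = u0 p" if "burgers_sol U f W v" "p \<in> W" for W v p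
    using that unfolding burgers_sol_def by (intro val) auto
  have uniq: "burgers_unique_on U f S u0"
    unfolding burgers_unique_on_def using oS solS solval by auto
  have maxl: "W \<subseteq> S" if "burgers_unique_on U f W v" for W v
  proof
    fix p assume p: "p \<in> W"
    have bs: "burgers_sol U f W v" using that by (simp add: burgers_unique_on_def)
    from solval[OF bs p] have "p \<in> V" "v p = u0 p" by auto
    with bs p show "p \<in> S" unfolding burgers_sol_def S_def by auto
  qed
  have dom: "burgers_domain U f S"
    unfolding burgers_domain_def using uniq maxl by blast
  have om: "Omega_f U f = S"
    unfolding Omega_f_def
  proof (rule the_equality[where P="burgers_domain U f", OF dom])
    fix O' assume "burgers_domain U f O'"
    then show "O' = S" using dom maxl unfolding burgers_domain_def by (meson subset_antisym)
  qed
  have "\<forall>p\<in>S. burgers U f (fst p) (snd p) = u0 p"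
  proof
    fix p assume p: "p \<in> S"
    let ?u = "SOME u. burgers_unique_on U f S u"
    have "burgers_unique_on U f S ?u" by (rule someI[of _ u0]) (rule uniq)
    then have "?u p = u0 p" using solS p unfolding burgers_unique_on_def by auto
    then show "burgers U f (fst p) (snd p) = u0 p" using om by (simp add: burgers_def)
  qed
  with dom om show ?thesis by blast
qed

lemma seedsI:
  fixes F :: "complex \<Rightarrow> complex"
  assumes "F holomorphic_on ball 0 (1/2)" "\<And>z. cmod z < 1/2 \<Longrightarrow> Im (F z) > 0"
  shows "admissible_seed (ball 0 (1/2)) F"
  unfolding admissible_seed_def
proof (intro conjI)
  show "\<exists>a b::real. a < b \<and> complex_of_real ` {a<..<b} \<subseteq> ball 0 (1/2)"
    by (rule exI[of _ "-1/4"], rule exI[of _ "1/4"]) auto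
qed (use assms in auto)

lemma in_half_ball:
  assumes "(Re z)^2 + (Im z)^2 < 1/4"
  shows "z \<in> ball 0 (1/2)"
proof -
  have "cmod z = sqrt ((Re z)^2 + (Im z)^2)" by (simp add: cmod_def)
  also have "\<dots> < sqrt (1/4)" using assms by (simp add: real_sqrt_less_iff)
  also have "sqrt (1/4) = (1/2::real)" by (simp add: real_sqrt_divide)
  finally show ?thesis by simp
qed

theorem proposition7p1:
  shows "\<exists>(U::complex set) (f::complex \<Rightarrow> complex) (g::complex \<Rightarrow> complex) (x::real) (y::real).
    admissible_seed U f \<and> admissible_seed U g \<and> admissible_seed U (\<lambda>z. f z * g z) \<and>
    (\<exists>\<Omega>. burgers_domain U f \<Omega>) \<and> (\<exists>\<Omega>. burgers_domain U g \<Omega>) \<and>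
    (\<exists>\<Omega>. burgers_domain U (\<lambda>z. f z * g z) \<Omega>) \<and>
    x \<noteq> 0 \<and> (x, y) \<in> Omega_f U f \<and> (x, y) \<in> Omega_f U g \<and>
    (x, y) \<in> Omega_f U (\<lambda>z. f z * g z) \<and>
    burgers U (\<lambda>z. f z * g z) x y \<noteq> burgers U f x y * burgers U g x y"
proof -
  define U :: "complex set" where "U = ball 0 (1/2)"
  define f :: "complex \<Rightarrow> complex" where "f = (\<lambda>_. \<i>)"
  define g :: "complex \<Rightarrow> complex" where "g = (\<lambda>z. 1 + \<i> + z)"
  have fg: "(\<lambda>z. f z * g z) = (\<lambda>z. \<i> * (1 + \<i> + z))" by (simp add: f_def g_def)
  have imb: "\<bar>Re z\<bar> < 1/2" "\<bar>Im z\<bar> < 1/2" if "cmod z < 1/2" for z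
    using abs_Re_le_cmod[of z] abs_Im_le_cmod[of z] that by linarith+
  have af: "admissible_seed U f" unfolding U_def f_def by (rule seedsI) (auto intro: holomorphic_intros)
  have ag: "admissible_seed U g" unfolding U_def g_def
  proof (rule seedsI)
    show "(\<lambda>z. 1 + \<i> + z) holomorphic_on ball 0 (1 / 2)" by (intro holomorphic_intros)
    fix z :: complex assume "cmod z < 1/2"
    then show "Im (1 + \<i> + z) > 0" using abs_Im_le_cmod[of z] by simp
  qed
  have ah: "admissible_seed U (\<lambda>z. f z * g z)" unfolding U_def fg
  proof (rule seedsI)
    show "(\<lambda>z. \<i> * (1 + \<i> + z)) holomorphic_on ball 0 (1 / 2)" by (intro holomorphic_intros)
    fix z :: complex assume "cmod z < 1/2"
    then show "Im (\<i> * (1 + \<i> + z)) > 0" using abs_Re_le_cmod[of z] by simp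
  qed
  define Sf where "Sf = {p\<in>(UNIV::(real\<times>real) set). Im ((\<lambda>_. \<i>) p) > 0 \<and> of_real (snd p) - (\<lambda>_. \<i>) p * of_real (fst p) \<in> U}"
  have Df: "burgers_domain U f Sf \<and> Omega_f U f = Sf \<and> (\<forall>p\<in>Sf. burgers U f (fst p) (snd p) = \<i>)"
    unfolding Sf_def
  proof (rule domain_lemma)
    show "\<exists>D :: real \<times> real \<Rightarrow> (real \<times> real) \<Rightarrow>\<^sub>L complex.
        (\<forall>p\<in>UNIV. ((\<lambda>_. \<i>) has_derivative blinfun_apply (D p)) (at p)) \<and> continuous_on UNIV D"
      by (rule C1I[where a="\<lambda>_. 0" and b="\<lambda>_. 0"]) (auto intro: has_derivative_eq_rhs[OF has_derivative_const])
  qed (auto simp: U_def f_def)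
  define Vg where "Vg = {p::real\<times>real. fst p \<noteq> -1}"
  define ug where "ug = (\<lambda>p::real\<times>real. (1 + \<i> + of_real (snd p)) / (1 + of_real (fst p)))"
  define Sg where "Sg = {p\<in>Vg. Im (ug p) > 0 \<and> of_real (snd p) - ug p * of_real (fst p) \<in> U}"
  have nz: "1 + complex_of_real x \<noteq> 0" if "x \<noteq> -1" for x
    using that by (simp add: complex_eq_iff)
  have Dg: "burgers_domain U g Sg \<and> Omega_f U g = Sg \<and> (\<forall>p\<in>Sg. burgers U g (fst p) (snd p) = ug p)"
    unfolding Sg_def
  proof (rule domain_lemma)
    show "open U" by (simp add: U_def)
    show "open Vg" unfolding Vg_def by (intro open_Collect_neq continuous_intros)
    show "continuous_on Vg ug" unfolding ug_def Vg_def by (intro continuous_intros) (auto dest: nz)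
    show "\<exists>D :: real \<times> real \<Rightarrow> (real \<times> real) \<Rightarrow>\<^sub>L complex.
        (\<forall>p\<in>Vg. (ug has_derivative blinfun_apply (D p)) (at p)) \<and> continuous_on Vg D"
      unfolding ug_def
      by (rule C1I, rule derg) (auto simp: Vg_def intro!: continuous_intros dest: nz)
    fix p :: "real \<times> real" and w :: complex
    assume "0 < Im w" "w = g (of_real (snd p) - w * of_real (fst p))"
    then have e: "w * (1 + of_real (fst p)) = 1 + \<i> + of_real (snd p)"
      by (simp add: g_def algebra_simps)
    have "fst p \<noteq> -1"
    proof
      assume "fst p = -1"
      with e have "1 + \<i> + complex_of_real (snd p) = 0" by simp
      then show False by (simp add: complex_eq_iff)
    qed
    with e show "p \<in> Vg \<and> w = ug p" unfolding Vg_def ug_def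
      by (simp add: field_simps nz)
  next
    fix p :: "real \<times> real" assume "p \<in> Vg"
    then have "1 + complex_of_real (fst p) \<noteq> 0" by (simp add: Vg_def nz)
    then show "ug p = g (of_real (snd p) - ug p * of_real (fst p))"
      unfolding ug_def g_def by (simp add: field_simps)
  qed
  define uh where "uh = (\<lambda>p::real\<times>real. \<i> * (1 + \<i> + of_real (snd p)) / (1 + \<i> * of_real (fst p)))"
  define Sh where "Sh = {p\<in>(UNIV::(real\<times>real) set). Im (uh p) > 0 \<and> of_real (snd p) - uh p * of_real (fst p) \<in> U}"
  have nz2: "1 + \<i> * complex_of_real x \<noteq> 0" for x
    by (simp add: complex_eq_iff)
  have Dh: "burgers_domain U (\<lambda>z. f z * g z) Sh \<and> Omega_f U (\<lambda>z. f z * g z) = Sh \<and>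
      (\<forall>p\<in>Sh. burgers U (\<lambda>z. f z * g z) (fst p) (snd p) = uh p)"
    unfolding Sh_def
  proof (rule domain_lemma)
    show "open U" by (simp add: U_def)
    show "continuous_on UNIV uh" unfolding uh_def by (intro continuous_intros) (auto simp: nz2)
    show "\<exists>D :: real \<times> real \<Rightarrow> (real \<times> real) \<Rightarrow>\<^sub>L complex.
        (\<forall>p\<in>UNIV. (uh has_derivative blinfun_apply (D p)) (at p)) \<and> continuous_on UNIV D"
      unfolding uh_def
      by (rule C1I, rule derh) (auto intro!: continuous_intros simp: nz2)
    fix p :: "real \<times> real" and w :: complex
    assume "0 < Im w" "w = f (of_real (snd p) - w * of_real (fst p)) * g (of_real (snd p) - w * of_real (fst p))"
    then have e: "w * (1 + \<i> * of_real (fst p)) = \<i> * (1 + \<i> + of_real (snd p))"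
      by (simp add: f_def g_def algebra_simps)
    then show "p \<in> UNIV \<and> w = uh p" unfolding uh_def
      by (simp add: field_simps nz2)
  next
    fix p :: "real \<times> real"
    have "1 + \<i> * complex_of_real (fst p) \<noteq> 0" by (rule nz2)
    then show "uh p = f (of_real (snd p) - uh p * of_real (fst p)) * g (of_real (snd p) - uh p * of_real (fst p))"
      unfolding uh_def g_def f_def by (simp add: field_simps)
  qed simp
  have p1: "(1/4, 0) \<in> Sf" unfolding Sf_def U_def by (simp add: cmod_def)
  have p2: "(1/4, 0) \<in> Sg" unfolding Sg_def U_def ug_def Vg_def
    by (intro CollectI conjI in_half_ball; simp add: power2_eq_square complex_eq_iff Re_divide Im_divide)
  have p3: "(1/4, 0) \<in> Sh" unfolding Sh_def U_def uh_def
    by (intro CollectI conjI in_half_ball; simp add: power2_eq_square complex_eq_iff Re_divide Im_divide)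
  have neq: "uh (1/4, 0) \<noteq> \<i> * ug (1/4, 0)"
    unfolding uh_def ug_def by (simp add: complex_eq_iff Re_divide Im_divide)
  have b1: "burgers U f (1/4) 0 = \<i>" using Df p1 by fastforce
  have b2: "burgers U g (1/4) 0 = ug (1/4, 0)" using Dg p2 by fastforce
  have b3: "burgers U (\<lambda>z. f z * g z) (1/4) 0 = uh (1/4, 0)" using Dh p3 by fastforce
  show ?thesis
    apply (rule exI[of _ U], rule exI[of _ f], rule exI[of _ g], rule exI[of _ "1/4"], rule exI[of _ 0])
    using af ag ah Df Dg Dh p1 p2 p3 neq b1 b2 b3 by (auto simp: mult.commute)
qed

end
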